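(* Let $a>1$ and let $f$ be a continuous and bounded real function on $X=[0,\infty)\times[0,\infty)$. For all $m,n\in\mathbb{N}$ and $(x,y)\in X$, \[ |\hat{Y}_{m,n,a}(f;x,y)-f(x,y)|\leq 2\,\omega(f;\delta_{m,n}), \qquad |\hat{Y}_{m,n,a}(f;x,y)-f(x,y)|\leq 2\{\omega_1(f,\delta_m)+\omega_2(f,\delta_n)\}, \] where \[ \delta_m=\sqrt{\frac{x\left(m^2x(a^{1/m}-1)^2-(a^{1/m}-1)\log a\,(2mx-1)+x(\log a)^2\right)}{m^2(a^{1/m}-1)^2}}, \] \[ \delta_n=\sqrt{\frac{y\left(n^2y(a^{1/n}-1)^2-(a^{1/n}-1)\log a\,(2ny-1)+y(\log a)^2\right)}{n^2(a^{1/n}-1)^2}}, \] and $\delta_{m,n}=\sqrt{\delta_m^2+\delta_n^2}$.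
   Context: For $m,n\in\mathbb{N}$, $(x,y)\in X$ and integers $k_1,k_2\ge0$ let \[ s_{m,n,k_1,k_2}^a(x,y)=a^{-\frac{x}{a^{1/m}-1}}\,a^{-\frac{y}{a^{1/n}-1}}\,\frac{x^{k_1}y^{k_2}(\log a)^{k_1+k_2}}{(a^{1/m}-1)^{k_1}(a^{1/n}-1)^{k_2}\,k_1!\,k_2!}, \] \[ \hat{Y}_{m,n,a}(f;x,y)=\sum_{k_1=0}^{\infty}\sum_{k_2=0}^{\infty}s_{m,n,k_1,k_2}^a(x,y)\,f\!\left(\tfrac{k_1}{m},\tfrac{k_2}{n}\right). \] (The quantities $\delta_m^2,\delta_n^2$ are $\hat{Y}_{m,n,a}((t-x)^2;x,y)$ and $\hat{Y}_{m,n,a}((s-y)^2;x,y)$.) The total modulus of continuity is $\omega(f,\delta)=\sup\{|f(t,s)-f(x,y)|:(t,s),(x,y)\in X,\ \sqrt{(t-x)^2+(s-y)^2}\le\delta\}$; the partial moduli are $\omega_1(f,\delta)=\sup\{|f(u_1,y)-f(u_2,y)|:u_1,u_2,y\ge0,\ |u_1-u_2|\le\delta\}$ and $\omega_2(f,\delta)=\sup\{|f(x,v_1)-f(x,v_2)|:x,v_1,v_2\ge0,\ |v_1-v_2|\le\delta\}$. *)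

theory Defs
  imports "HOL-Analysis.Analysis"
begin

definition quadrant :: "(real \<times> real) set" where
  "quadrant = {p. fst p \<ge> 0 \<and> snd p \<ge> 0}"

definition s_kernel :: "real \<Rightarrow> nat \<Rightarrow> nat \<Rightarrow> nat \<Rightarrow> nat \<Rightarrow> real \<Rightarrow> real \<Rightarrow> real" where
  "s_kernel a m n k1 k2 x y =
     a powr (- x / (a powr (1 / real m) - 1)) * a powr (- y / (a powr (1 / real n) - 1)) *
     (x ^ k1 * y ^ k2 * (ln a) ^ (k1 + k2) /
      ((a powr (1 / real m) - 1) ^ k1 * (a powr (1 / real n) - 1) ^ k2 * fact k1 * fact k2))"

definition Yhat :: "real \<Rightarrow> nat \<Rightarrow> nat \<Rightarrow> (real \<times> real \<Rightarrow> real) \<Rightarrow> real \<Rightarrow> real \<Rightarrow> real" where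
  "Yhat a m n f x y =
     (\<Sum>k1. \<Sum>k2. s_kernel a m n k1 k2 x y * f (real k1 / real m, real k2 / real n))"

definition total_modulus :: "(real \<times> real \<Rightarrow> real) \<Rightarrow> real \<Rightarrow> real" where
  "total_modulus f \<delta> = Sup {\<bar>f (t, s) - f (x, y)\<bar> | t s x y.
      (t, s) \<in> quadrant \<and> (x, y) \<in> quadrant \<and> sqrt ((t - x)^2 + (s - y)^2) \<le> \<delta>}"

definition partial_modulus1 :: "(real \<times> real \<Rightarrow> real) \<Rightarrow> real \<Rightarrow> real" where
  "partial_modulus1 f \<delta> = Sup {\<bar>f (u1, y) - f (u2, y)\<bar> | u1 u2 y.
      u1 \<ge> 0 \<and> u2 \<ge> 0 \<and> y \<ge> 0 \<and> \<bar>u1 - u2\<bar> \<le> \<delta>}"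

definition partial_modulus2 :: "(real \<times> real \<Rightarrow> real) \<Rightarrow> real \<Rightarrow> real" where
  "partial_modulus2 f \<delta> = Sup {\<bar>f (x, v1) - f (x, v2)\<bar> | x v1 v2.
      x \<ge> 0 \<and> v1 \<ge> 0 \<and> v2 \<ge> 0 \<and> \<bar>v1 - v2\<bar> \<le> \<delta>}"

definition delta_m :: "real \<Rightarrow> nat \<Rightarrow> real \<Rightarrow> real" where
  "delta_m a m x = sqrt (x * (real m ^ 2 * x * (a powr (1 / real m) - 1)^2
      - (a powr (1 / real m) - 1) * ln a * (2 * real m * x - 1) + x * (ln a)^2)
      / (real m ^ 2 * (a powr (1 / real m) - 1)^2))"

end

theory Submission
  imports Defs
begin


definition pois :: "real \<Rightarrow> nat \<Rightarrow> real" where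
  "pois l k = exp (- l) * l ^ k / fact k"

lemma pois0: "(\<lambda>k. l ^ k / fact k) sums exp (l::real)"
  using exp_converges[of l] by (simp add: divide_inverse mult.commute)

lemma pois1: "(\<lambda>k. real k * l ^ k / fact k) sums (l * exp (l::real))"
proof -
  have "(\<lambda>j. l * (l ^ j / fact j)) sums (l * exp l)"
    using sums_mult[OF pois0] .
  moreover have "(\<lambda>j. real (Suc j) * l ^ Suc j / fact (Suc j)) = (\<lambda>j. l * (l ^ j / fact j))"
  proof (rule ext)
    fix j
    have f: "(fact (Suc j)::real) = (real j + 1) * fact j" by simp
    have "(fact j::real) > 0" by simp
    then have "(fact j::real) + fact j * real j > 0" by (simp add: add_pos_nonneg)
    then show "real (Suc j) * l ^ Suc j / fact (Suc j) = l * (l ^ j / fact j)"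
      unfolding f by (simp add: field_simps)
  qed
  ultimately have "(\<lambda>j. real (Suc j) * l ^ Suc j / fact (Suc j)) sums (l * exp l)" by simp
  then show ?thesis by (subst (asm) sums_Suc_iff) simp
qed

lemma pois2: "(\<lambda>k. (real k)^2 * l ^ k / fact k) sums (l * (l * exp l + exp (l::real)))"
proof -
  have "(\<lambda>j. l * (real j * l ^ j / fact j + l ^ j / fact j)) sums (l * (l * exp l + exp l))"
    using sums_mult[OF sums_add[OF pois1 pois0]] .
  moreover have "(\<lambda>j. (real (Suc j))^2 * l ^ Suc j / fact (Suc j)) = (\<lambda>j. l * (real j * l ^ j / fact j + l ^ j / fact j))"
  proof (rule ext)
    fix j
    have f: "(fact (Suc j)::real) = (real j + 1) * fact j" by simp
    have "(fact j::real) > 0" by simp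
    then have "(fact j::real) + fact j * real j > 0" by (simp add: add_pos_nonneg)
    then show "(real (Suc j))^2 * l ^ Suc j / fact (Suc j) = l * (real j * l ^ j / fact j + l ^ j / fact j)"
      unfolding f by (simp add: field_simps power2_eq_square)
  qed
  ultimately have "(\<lambda>j. (real (Suc j))^2 * l ^ Suc j / fact (Suc j)) sums (l * (l * exp l + exp l))" by simp
  then show ?thesis by (subst (asm) sums_Suc_iff) simp
qed

lemma pois_sums1: "pois l sums 1"
proof -
  have "(\<lambda>k. exp (-l) * (l ^ k / fact k)) sums (exp (-l) * exp l)"
    using sums_mult[OF pois0] .
  moreover have "pois l = (\<lambda>k. exp (-l) * (l ^ k / fact k))" by (auto simp: pois_def)
  moreover have "exp (-l) * exp l = 1" by (simp add: exp_minus)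
  ultimately show ?thesis by simp
qed

lemma pois_nonneg: "l \<ge> 0 \<Longrightarrow> pois l k \<ge> 0"
  by (simp add: pois_def)

lemma pois_var:
  fixes l x :: real and m :: nat
  assumes "m \<ge> 1"
  shows "(\<lambda>k. pois l k * (real k / real m - x)^2) sums
     ((l^2 + l) / (real m)^2 - 2 * x * l / real m + x^2)"
proof -
  have "(\<lambda>k. exp (-l) * ((1 / (real m)^2) * ((real k)^2 * l ^ k / fact k)
       - (2 * x / real m) * (real k * l ^ k / fact k) + x^2 * (l ^ k / fact k)))
     sums (exp (-l) * ((1 / (real m)^2) * (l * (l * exp l + exp l))
       - (2 * x / real m) * (l * exp l) + x^2 * exp l))"
    by (intro sums_mult sums_add sums_diff pois0 pois1 pois2)
  moreover have "(\<lambda>k. exp (-l) * ((1 / (real m)^2) * ((real k)^2 * l ^ k / fact k)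
       - (2 * x / real m) * (real k * l ^ k / fact k) + x^2 * (l ^ k / fact k)))
     = (\<lambda>k. pois l k * (real k / real m - x)^2)"
    using assms by (intro ext) (simp add: pois_def field_simps power2_eq_square)
  moreover have "exp (-l) * ((1 / (real m)^2) * (l * (l * exp l + exp l))
       - (2 * x / real m) * (l * exp l) + x^2 * exp l)
     = (l^2 + l) / (real m)^2 - 2 * x * l / real m + x^2"
    using assms by (simp add: exp_minus field_simps power2_eq_square)
  ultimately show ?thesis by simp
qed



lemma one_dim:
  fixes P F u :: "nat \<Rightarrow> real"
  assumes P0: "\<And>k. P k \<ge> 0" and P1: "P sums 1" and Pu: "(\<lambda>k. P k * u k) sums d"
    and H: "\<And>k. P k \<noteq> 0 \<Longrightarrow> \<bar>F k - c\<bar> \<le> A + B * u k"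
  shows "summable (\<lambda>k. P k * F k) \<and> \<bar>(\<Sum>k. P k * F k) - c\<bar> \<le> A + B * d"
proof -
  have S: "(\<lambda>k. P k * (A + B * u k)) sums (A + B * d)"
  proof -
    have "(\<lambda>k. A * P k + B * (P k * u k)) sums (A * 1 + B * d)"
      by (intro sums_add sums_mult P1 Pu)
    moreover have "(\<lambda>k. A * P k + B * (P k * u k)) = (\<lambda>k. P k * (A + B * u k))"
      by (auto simp: algebra_simps)
    ultimately show ?thesis by simp
  qed
  have S2: "(\<lambda>k. \<bar>c\<bar> * P k + P k * (A + B * u k)) sums (\<bar>c\<bar> * 1 + (A + B * d))"
    by (intro sums_add sums_mult P1 S)
  have sm: "summable (\<lambda>k. P k * F k)"
  proof (rule summable_comparison_test)
    show "\<exists>N. \<forall>n\<ge>N. norm (P n * F n) \<le> \<bar>c\<bar> * P n + P n * (A + B * u n)"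
    proof (intro exI allI impI)
      fix n :: nat
      show "norm (P n * F n) \<le> \<bar>c\<bar> * P n + P n * (A + B * u n)"
      proof (cases "P n = 0")
        case True then show ?thesis by simp
      next
        case False
        have "\<bar>F n\<bar> \<le> \<bar>c\<bar> + (A + B * u n)" using H[OF False] by linarith
        then have "P n * \<bar>F n\<bar> \<le> P n * (\<bar>c\<bar> + (A + B * u n))"
          using P0[of n] by (rule mult_left_mono)
        then show ?thesis using P0[of n] by (simp add: abs_mult algebra_simps)
      qed
    qed
    show "summable (\<lambda>k. \<bar>c\<bar> * P k + P k * (A + B * u k))" using S2 by (rule sums_summable)
  qed
  have D: "(\<lambda>k. P k * F k - c * P k) sums ((\<Sum>k. P k * F k) - c * 1)"
    by (intro sums_diff sums_mult P1 summable_sums sm)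
  have T: "\<bar>P k * F k - c * P k\<bar> \<le> P k * (A + B * u k)" for k
  proof (cases "P k = 0")
    case True then show ?thesis by simp
  next
    case False
    have "P k * \<bar>F k - c\<bar> \<le> P k * (A + B * u k)"
      using mult_left_mono[OF H[OF False] P0[of k]] .
    moreover have "P k * F k - c * P k = P k * (F k - c)" by (simp add: algebra_simps)
    ultimately show ?thesis using P0[of k] by (simp add: abs_mult)
  qed
  have l1: "(\<Sum>k. P k * F k) - c \<le> A + B * d"
    using sums_le[OF _ D S, of] T by (simp add: abs_le_iff)
  have D': "(\<lambda>k. - (P k * F k - c * P k)) sums (- ((\<Sum>k. P k * F k) - c * 1))"
    using sums_minus[OF D] .
  have l2: "c - (\<Sum>k. P k * F k) \<le> A + B * d"
    using sums_le[OF _ D' S] T by (simp add: abs_le_iff)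
  show ?thesis using sm l1 l2 by auto
qed

lemma two_dim:
  fixes P Q u v :: "nat \<Rightarrow> real" and F :: "nat \<Rightarrow> nat \<Rightarrow> real"
  assumes P0: "\<And>k. P k \<ge> 0" and P1: "P sums 1" and Pu: "(\<lambda>k. P k * u k) sums d1"
    and Q0: "\<And>k. Q k \<ge> 0" and Q1: "Q sums 1" and Qv: "(\<lambda>k. Q k * v k) sums d2"
    and H: "\<And>i j. P i \<noteq> 0 \<Longrightarrow> Q j \<noteq> 0 \<Longrightarrow> \<bar>F i j - c\<bar> \<le> A + B * u i + C * v j"
  shows "\<bar>(\<Sum>i. \<Sum>j. P i * Q j * F i j) - c\<bar> \<le> A + B * d1 + C * d2"
proof -
  define I where "I i = (\<Sum>j. Q j * F i j)" for i
  have inner: "summable (\<lambda>j. Q j * F i j) \<and> \<bar>I i - c\<bar> \<le> (A + B * u i) + C * d2"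
    if "P i \<noteq> 0" for i
    unfolding I_def using H[OF that]
    by (intro one_dim[OF Q0 Q1 Qv]) (simp add: algebra_simps)
  have eq: "(\<Sum>j. P i * Q j * F i j) = P i * I i" for i
  proof (cases "P i = 0")
    case True then show ?thesis by simp
  next
    case False
    then show ?thesis using inner[OF False] unfolding I_def
      by (simp add: suminf_mult mult.assoc)
  qed
  have "\<bar>(\<Sum>i. P i * I i) - c\<bar> \<le> (A + C * d2) + B * d1"
    using one_dim[OF P0 P1 Pu, of I c "A + C * d2" B] inner by (auto simp: algebra_simps)
  then show ?thesis using eq by (simp add: algebra_simps)
qed

lemma chain:
  fixes g :: "real \<Rightarrow> real" and N :: nat and W :: real
  assumes "\<And>i. i < N \<Longrightarrow> \<bar>g (real (Suc i) / N) - g (real i / N)\<bar> \<le> W" and "N \<ge> 1"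
  shows "\<bar>g 1 - g 0\<bar> \<le> N * W"
proof -
  have "g 1 - g 0 = (\<Sum>i<N. g (real (Suc i) / N) - g (real i / N))"
    using sum_lessThan_telescope[of "\<lambda>i. g (real i / N)" N] assms(2) by simp
  then have "\<bar>g 1 - g 0\<bar> \<le> (\<Sum>i<N. \<bar>g (real (Suc i) / N) - g (real i / N)\<bar>)"
    by (simp add: sum_abs)
  also have "\<dots> \<le> (\<Sum>i<N. W)" by (intro sum_mono assms(1)) simp
  finally show ?thesis by simp
qed

lemma key:
  fixes g :: "real \<Rightarrow> real"
  assumes "\<delta> > 0" "\<rho> \<ge> 0" "W \<ge> 0"
    and H: "\<And>s t. 0 \<le> s \<Longrightarrow> s \<le> t \<Longrightarrow> t \<le> 1 \<Longrightarrow> (t - s) * \<rho> \<le> \<delta> \<Longrightarrow> \<bar>g t - g s\<bar> \<le> W"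
  shows "\<bar>g 1 - g 0\<bar> \<le> (1 + \<rho>^2 / \<delta>^2) * W"
proof (cases "\<rho> \<le> \<delta>")
  case True
  then have "\<bar>g 1 - g 0\<bar> \<le> W" using H[of 0 1] by simp
  also have "\<dots> \<le> (1 + \<rho>^2 / \<delta>^2) * W" using assms(3) by (simp add: mult_le_cancel_right1)
  finally show ?thesis .
next
  case False
  define r where "r = \<rho> / \<delta>"
  have r1: "r > 1" using False assms(1) by (simp add: r_def)
  define N where "N = nat \<lceil>r\<rceil>"
  have "real_of_int \<lceil>r\<rceil> > 1" using r1 le_of_int_ceiling[of r] by linarith
  then have "\<lceil>r\<rceil> \<ge> 1" by linarith
  then have N1: "N \<ge> 1" unfolding N_def by (simp add: le_nat_iff)
  have Nr: "real N \<ge> r" "real N \<le> r + 1" using r1 by (auto simp: N_def)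
  have step: "\<bar>g (real (Suc i) / N) - g (real i / N)\<bar> \<le> W" if "i < N" for i
  proof (rule H)
    show "0 \<le> real i / real N" by simp
    show "real i / real N \<le> real (Suc i) / real N" using N1 by (simp add: divide_right_mono)
    show "real (Suc i) / real N \<le> 1" using that N1 by simp
    have "(real (Suc i) / real N - real i / real N) = 1 / N" using N1 by (simp add: field_simps)
    moreover have "\<rho> / N \<le> \<delta>"
    proof -
      have "\<rho> = r * \<delta>" using assms(1) by (simp add: r_def)
      also have "\<dots> \<le> N * \<delta>" using Nr assms(1) by (simp add: mult_right_mono)
      finally show ?thesis using N1 by (simp add: divide_le_eq mult.commute)
    qed
    ultimately show "(real (Suc i) / real N - real i / real N) * \<rho> \<le> \<delta>" by simp
  qed
  have "\<bar>g 1 - g 0\<bar> \<le> N * W" by (rule chain[OF step N1])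
  also have "\<dots> \<le> (r + 1) * W" using Nr assms(3) by (simp add: mult_right_mono)
  also have "\<dots> \<le> (1 + \<rho>^2 / \<delta>^2) * W"
  proof -
    have "r \<le> r^2" using r1 by (simp add: power2_eq_square)
    moreover have "r^2 = \<rho>^2 / \<delta>^2" by (simp add: r_def power_divide)
    ultimately show ?thesis using assms(3) by (intro mult_right_mono) auto
  qed
  finally show ?thesis .
qed



lemma quad_iff[simp]: "(p, q) \<in> quadrant \<longleftrightarrow> p \<ge> 0 \<and> q \<ge> 0"
  by (simp add: quadrant_def)

lemma bound_f:
  fixes f :: "real \<times> real \<Rightarrow> real"
  assumes "bounded (f ` quadrant)"
  obtains M where "\<And>p q. p \<ge> 0 \<Longrightarrow> q \<ge> 0 \<Longrightarrow> \<bar>f (p, q)\<bar> \<le> M"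
proof -
  obtain M where M: "\<forall>z\<in>f ` quadrant. \<bar>z\<bar> \<le> M" using assms unfolding bounded_real by blast
  have "\<bar>f (p, q)\<bar> \<le> M" if "p \<ge> 0" "q \<ge> 0" for p q
  proof -
    have "(p, q) \<in> quadrant" using that by simp
    then show ?thesis using M by blast
  qed
  then show ?thesis using that by blast
qed

lemma tm_upper:
  fixes f :: "real \<times> real \<Rightarrow> real"
  assumes "bounded (f ` quadrant)" "t \<ge> 0" "s \<ge> 0" "x \<ge> 0" "y \<ge> 0"
    "sqrt ((t - x)^2 + (s - y)^2) \<le> \<delta>"
  shows "\<bar>f (t, s) - f (x, y)\<bar> \<le> total_modulus f \<delta>"
proof -
  obtain M where M: "\<And>p q. p \<ge> 0 \<Longrightarrow> q \<ge> 0 \<Longrightarrow> \<bar>f (p, q)\<bar> \<le> M"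
    using bound_f[OF assms(1)] by blast
  show ?thesis unfolding total_modulus_def
  proof (rule cSup_upper)
    show "\<bar>f (t, s) - f (x, y)\<bar> \<in> {\<bar>f (t, s) - f (x, y)\<bar> | t s x y.
      (t, s) \<in> quadrant \<and> (x, y) \<in> quadrant \<and> sqrt ((t - x)^2 + (s - y)^2) \<le> \<delta>}"
      apply (rule CollectI)
      apply (rule exI[of _ t], rule exI[of _ s], rule exI[of _ x], rule exI[of _ y])
      using assms by simp
    show "bdd_above {\<bar>f (t, s) - f (x, y)\<bar> | t s x y.
      (t, s) \<in> quadrant \<and> (x, y) \<in> quadrant \<and> sqrt ((t - x)^2 + (s - y)^2) \<le> \<delta>}"
    proof (rule bdd_aboveI[of _ "2 * M"], clarsimp)
      fix t s x y :: real assume "0 \<le> t" "0 \<le> s" "0 \<le> x" "0 \<le> y"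
      then have "\<bar>f (t, s)\<bar> \<le> M" "\<bar>f (x, y)\<bar> \<le> M" using M by auto
      then show "\<bar>f (t, s) - f (x, y)\<bar> \<le> 2 * M" by linarith
    qed
  qed
qed

lemma pm1_upper:
  fixes f :: "real \<times> real \<Rightarrow> real"
  assumes "bounded (f ` quadrant)" "u1 \<ge> 0" "u2 \<ge> 0" "y \<ge> 0" "\<bar>u1 - u2\<bar> \<le> \<delta>"
  shows "\<bar>f (u1, y) - f (u2, y)\<bar> \<le> partial_modulus1 f \<delta>"
proof -
  obtain M where M: "\<And>p q. p \<ge> 0 \<Longrightarrow> q \<ge> 0 \<Longrightarrow> \<bar>f (p, q)\<bar> \<le> M"
    using bound_f[OF assms(1)] by blast
  show ?thesis unfolding partial_modulus1_def
  proof (rule cSup_upper)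
    show "\<bar>f (u1, y) - f (u2, y)\<bar> \<in> {\<bar>f (u1, y) - f (u2, y)\<bar> | u1 u2 y.
      u1 \<ge> 0 \<and> u2 \<ge> 0 \<and> y \<ge> 0 \<and> \<bar>u1 - u2\<bar> \<le> \<delta>}"
      using assms by blast
    show "bdd_above {\<bar>f (u1, y) - f (u2, y)\<bar> | u1 u2 y.
      u1 \<ge> 0 \<and> u2 \<ge> 0 \<and> y \<ge> 0 \<and> \<bar>u1 - u2\<bar> \<le> \<delta>}"
    proof (rule bdd_aboveI[of _ "2 * M"], clarsimp)
      fix t s x :: real assume "0 \<le> t" "0 \<le> s" "0 \<le> x"
      then have "\<bar>f (t, x)\<bar> \<le> M" "\<bar>f (s, x)\<bar> \<le> M" using M by auto
      then show "\<bar>f (t, x) - f (s, x)\<bar> \<le> 2 * M" by linarith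
    qed
  qed
qed

lemma pm2_upper:
  fixes f :: "real \<times> real \<Rightarrow> real"
  assumes "bounded (f ` quadrant)" "v1 \<ge> 0" "v2 \<ge> 0" "x \<ge> 0" "\<bar>v1 - v2\<bar> \<le> \<delta>"
  shows "\<bar>f (x, v1) - f (x, v2)\<bar> \<le> partial_modulus2 f \<delta>"
proof -
  obtain M where M: "\<And>p q. p \<ge> 0 \<Longrightarrow> q \<ge> 0 \<Longrightarrow> \<bar>f (p, q)\<bar> \<le> M"
    using bound_f[OF assms(1)] by blast
  show ?thesis unfolding partial_modulus2_def
  proof (rule cSup_upper)
    show "\<bar>f (x, v1) - f (x, v2)\<bar> \<in> {\<bar>f (x, v1) - f (x, v2)\<bar> | x v1 v2.
      x \<ge> 0 \<and> v1 \<ge> 0 \<and> v2 \<ge> 0 \<and> \<bar>v1 - v2\<bar> \<le> \<delta>}"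
      using assms by blast
    show "bdd_above {\<bar>f (x, v1) - f (x, v2)\<bar> | x v1 v2.
      x \<ge> 0 \<and> v1 \<ge> 0 \<and> v2 \<ge> 0 \<and> \<bar>v1 - v2\<bar> \<le> \<delta>}"
    proof (rule bdd_aboveI[of _ "2 * M"], clarsimp)
      fix t s x :: real assume "0 \<le> t" "0 \<le> s" "0 \<le> x"
      then have "\<bar>f (t, x)\<bar> \<le> M" "\<bar>f (t, s)\<bar> \<le> M" using M by auto
      then show "\<bar>f (t, x) - f (t, s)\<bar> \<le> 2 * M" by linarith
    qed
  qed
qed

lemma tm_nonneg: "bounded ((f::real \<times> real \<Rightarrow> real) ` quadrant) \<Longrightarrow> \<delta> \<ge> 0 \<Longrightarrow> total_modulus f \<delta> \<ge> 0"
  using tm_upper[of f 0 0 0 0 \<delta>] by simp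
lemma pm1_nonneg: "bounded ((f::real \<times> real \<Rightarrow> real) ` quadrant) \<Longrightarrow> \<delta> \<ge> 0 \<Longrightarrow> partial_modulus1 f \<delta> \<ge> 0"
  using pm1_upper[of f 0 0 0 \<delta>] by simp
lemma pm2_nonneg: "bounded ((f::real \<times> real \<Rightarrow> real) ` quadrant) \<Longrightarrow> \<delta> \<ge> 0 \<Longrightarrow> partial_modulus2 f \<delta> \<ge> 0"
  using pm2_upper[of f 0 0 0 \<delta>] by simp

lemma cvx_nonneg: "(x::real) \<ge> 0 \<Longrightarrow> t \<ge> 0 \<Longrightarrow> 0 \<le> \<tau> \<Longrightarrow> \<tau> \<le> 1 \<Longrightarrow> x + \<tau> * (t - x) \<ge> 0"
proof -
  assume h: "x \<ge> 0" "t \<ge> 0" "0 \<le> \<tau>" "\<tau> \<le> 1"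
  have "x + \<tau> * (t - x) = (1 - \<tau>) * x + \<tau> * t" by (simp add: algebra_simps)
  also have "\<dots> \<ge> 0" using h by simp
  finally show ?thesis .
qed

lemma total_bound:
  fixes f :: "real \<times> real \<Rightarrow> real"
  assumes "bounded (f ` quadrant)" "t \<ge> 0" "s \<ge> 0" "x \<ge> 0" "y \<ge> 0" "\<delta> > 0"
  shows "\<bar>f (t, s) - f (x, y)\<bar> \<le> (1 + ((t - x)^2 + (s - y)^2) / \<delta>^2) * total_modulus f \<delta>"
proof -
  define \<rho> where "\<rho> = sqrt ((t - x)^2 + (s - y)^2)"
  define g where "g \<tau> = f (x + \<tau> * (t - x), y + \<tau> * (s - y))" for \<tau>
  have "\<bar>g 1 - g 0\<bar> \<le> (1 + \<rho>^2 / \<delta>^2) * total_modulus f \<delta>"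
  proof (rule key)
    show "\<delta> > 0" "\<rho> \<ge> 0" using assms by (auto simp: \<rho>_def)
    show "total_modulus f \<delta> \<ge> 0" using tm_nonneg assms by auto
    fix \<sigma> \<tau> :: real assume h: "0 \<le> \<sigma>" "\<sigma> \<le> \<tau>" "\<tau> \<le> 1" "(\<tau> - \<sigma>) * \<rho> \<le> \<delta>"
    have d: "sqrt ((x + \<tau> * (t - x) - (x + \<sigma> * (t - x)))^2 + (y + \<tau> * (s - y) - (y + \<sigma> * (s - y)))^2)
       = (\<tau> - \<sigma>) * \<rho>"
    proof -
      have "(x + \<tau> * (t - x) - (x + \<sigma> * (t - x)))^2 + (y + \<tau> * (s - y) - (y + \<sigma> * (s - y)))^2
          = (\<tau> - \<sigma>)^2 * ((t - x)^2 + (s - y)^2)" by (simp add: algebra_simps power2_eq_square)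
      then show ?thesis using h by (simp add: \<rho>_def real_sqrt_mult)
    qed
    have d': "sqrt ((x + \<tau> * (t - x) - (x + \<sigma> * (t - x)))^2 + (y + \<tau> * (s - y) - (y + \<sigma> * (s - y)))^2) \<le> \<delta>"
      using d h(4) by simp
    have h1: "0 \<le> \<tau>" using h by linarith
    show "\<bar>g \<tau> - g \<sigma>\<bar> \<le> total_modulus f \<delta>" unfolding g_def
      by (rule tm_upper[OF assms(1) cvx_nonneg cvx_nonneg cvx_nonneg cvx_nonneg d'])
        (use h h1 assms in auto)
  qed
  moreover have "\<rho>^2 = (t - x)^2 + (s - y)^2" by (simp add: \<rho>_def)
  ultimately show ?thesis by (simp add: g_def)
qed

lemma p1_bound:
  fixes f :: "real \<times> real \<Rightarrow> real"
  assumes "bounded (f ` quadrant)" "t \<ge> 0" "s \<ge> 0" "x \<ge> 0" "\<delta> > 0"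
  shows "\<bar>f (t, s) - f (x, s)\<bar> \<le> (1 + (t - x)^2 / \<delta>^2) * partial_modulus1 f \<delta>"
proof -
  define \<rho> where "\<rho> = \<bar>t - x\<bar>"
  define g where "g \<tau> = f (x + \<tau> * (t - x), s)" for \<tau>
  have "\<bar>g 1 - g 0\<bar> \<le> (1 + \<rho>^2 / \<delta>^2) * partial_modulus1 f \<delta>"
  proof (rule key)
    show "\<delta> > 0" "\<rho> \<ge> 0" using assms by (auto simp: \<rho>_def)
    show "partial_modulus1 f \<delta> \<ge> 0" using pm1_nonneg assms by auto
    fix \<sigma> \<tau> :: real assume h: "0 \<le> \<sigma>" "\<sigma> \<le> \<tau>" "\<tau> \<le> 1" "(\<tau> - \<sigma>) * \<rho> \<le> \<delta>"
    have d: "\<bar>x + \<tau> * (t - x) - (x + \<sigma> * (t - x))\<bar> = (\<tau> - \<sigma>) * \<rho>"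
    proof -
      have "x + \<tau> * (t - x) - (x + \<sigma> * (t - x)) = (\<tau> - \<sigma>) * (t - x)" by (simp add: algebra_simps)
      then show ?thesis using h by (simp add: \<rho>_def abs_mult)
    qed
    have d': "\<bar>x + \<tau> * (t - x) - (x + \<sigma> * (t - x))\<bar> \<le> \<delta>"
      using d h(4) by simp
    have h1: "0 \<le> \<tau>" using h by linarith
    show "\<bar>g \<tau> - g \<sigma>\<bar> \<le> partial_modulus1 f \<delta>" unfolding g_def
      by (rule pm1_upper[OF assms(1) cvx_nonneg cvx_nonneg _ d'])
        (use h h1 assms in auto)
  qed
  moreover have "\<rho>^2 = (t - x)^2" by (simp add: \<rho>_def)
  ultimately show ?thesis by (simp add: g_def)
qed

lemma p2_bound:
  fixes f :: "real \<times> real \<Rightarrow> real"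
  assumes "bounded (f ` quadrant)" "s \<ge> 0" "y \<ge> 0" "x \<ge> 0" "\<delta> > 0"
  shows "\<bar>f (x, s) - f (x, y)\<bar> \<le> (1 + (s - y)^2 / \<delta>^2) * partial_modulus2 f \<delta>"
proof -
  define \<rho> where "\<rho> = \<bar>s - y\<bar>"
  define g where "g \<tau> = f (x, y + \<tau> * (s - y))" for \<tau>
  have "\<bar>g 1 - g 0\<bar> \<le> (1 + \<rho>^2 / \<delta>^2) * partial_modulus2 f \<delta>"
  proof (rule key)
    show "\<delta> > 0" "\<rho> \<ge> 0" using assms by (auto simp: \<rho>_def)
    show "partial_modulus2 f \<delta> \<ge> 0" using pm2_nonneg assms by auto
    fix \<sigma> \<tau> :: real assume h: "0 \<le> \<sigma>" "\<sigma> \<le> \<tau>" "\<tau> \<le> 1" "(\<tau> - \<sigma>) * \<rho> \<le> \<delta>"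
    have d: "\<bar>y + \<tau> * (s - y) - (y + \<sigma> * (s - y))\<bar> = (\<tau> - \<sigma>) * \<rho>"
    proof -
      have "y + \<tau> * (s - y) - (y + \<sigma> * (s - y)) = (\<tau> - \<sigma>) * (s - y)" by (simp add: algebra_simps)
      then show ?thesis using h by (simp add: \<rho>_def abs_mult)
    qed
    have d': "\<bar>y + \<tau> * (s - y) - (y + \<sigma> * (s - y))\<bar> \<le> \<delta>"
      using d h(4) by simp
    have h1: "0 \<le> \<tau>" using h by linarith
    show "\<bar>g \<tau> - g \<sigma>\<bar> \<le> partial_modulus2 f \<delta>" unfolding g_def
      by (rule pm2_upper[OF assms(1) cvx_nonneg cvx_nonneg _ d'])
        (use h h1 assms in auto)
  qed
  moreover have "\<rho>^2 = (s - y)^2" by (simp add: \<rho>_def)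
  ultimately show ?thesis by (simp add: g_def)
qed



lemma b_pos: "(a::real) > 1 \<Longrightarrow> m \<ge> 1 \<Longrightarrow> a powr (1 / real m) - 1 > 0"
  using powr_less_mono[of 0 "1 / real m" a] by simp

lemma dm_sums:
  assumes "a > 1" "m \<ge> 1" "x \<ge> 0"
  shows "(\<lambda>k. pois (x * ln a / (a powr (1 / real m) - 1)) k * (real k / real m - x)^2)
           sums (delta_m a m x)^2 \<and> delta_m a m x \<ge> 0"
proof -
  define b where "b = a powr (1 / real m) - 1"
  define l where "l = x * ln a / b"
  have b: "b > 0" using b_pos[OF assms(1,2)] by (simp add: b_def)
  have l0: "l \<ge> 0" using assms b by (simp add: l_def)
  define E where "E = (l^2 + l) / (real m)^2 - 2 * x * l / real m + x^2"
  have S: "(\<lambda>k. pois l k * (real k / real m - x)^2) sums E"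
    unfolding E_def by (rule pois_var[OF assms(2)])
  have E0: "E \<ge> 0"
    using sums_le[OF _ sums_zero S] pois_nonneg[OF l0] by simp
  have "x * (real m ^ 2 * x * b^2 - b * ln a * (2 * real m * x - 1) + x * (ln a)^2)
      / (real m ^ 2 * b^2) = E"
    using b assms(2) unfolding E_def l_def by (simp add: field_simps power2_eq_square)
  then have "delta_m a m x = sqrt E" unfolding delta_m_def b_def[symmetric] by simp
  then have "(delta_m a m x)^2 = E" "delta_m a m x \<ge> 0" using E0 by simp_all
  then show ?thesis using S unfolding l_def b_def by simp
qed

lemma kernel_eq:
  assumes "a > 1" "m \<ge> 1" "n \<ge> 1"
  shows "s_kernel a m n k1 k2 x y =
     pois (x * ln a / (a powr (1 / real m) - 1)) k1 * pois (y * ln a / (a powr (1 / real n) - 1)) k2"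
proof -
  define b where "b = a powr (1 / real m) - 1"
  define c where "c = a powr (1 / real n) - 1"
  have b: "b > 0" using b_pos[OF assms(1,2)] by (simp add: b_def)
  have c: "c > 0" using b_pos[OF assms(1,3)] by (simp add: c_def)
  have e1: "a powr (- x / b) = exp (- (x * ln a / b))" using assms(1) by (simp add: powr_def)
  have e2: "a powr (- y / c) = exp (- (y * ln a / c))" using assms(1) by (simp add: powr_def)
  show ?thesis unfolding s_kernel_def b_def[symmetric] c_def[symmetric] pois_def e1 e2
    by (simp add: power_divide power_mult_distrib power_add field_simps)
qed

lemma sq_zero:
  assumes "\<And>k. P k \<ge> (0::real)" "(\<lambda>k. P k * u k) sums 0" "\<And>k. u k \<ge> 0" "P i \<noteq> 0"
  shows "u i = 0"
proof -
  have "\<forall>k. P k * u k = 0"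
    using suminf_eq_zero_iff[of "\<lambda>k. P k * u k"] assms(1-3) sums_summable[OF assms(2)]
      sums_unique[OF assms(2)] by simp
  then have "P i * u i = 0" by blast
  then show ?thesis using assms(4) by simp
qed



theorem mainTheorem3:
  fixes a :: real and f :: "real \<times> real \<Rightarrow> real" and m n :: nat and x y :: real
  assumes "a > 1"
    and "continuous_on quadrant f" and "bounded (f ` quadrant)"
    and "m \<ge> 1" and "n \<ge> 1"
    and "x \<ge> 0" and "y \<ge> 0"
  shows "\<bar>Yhat a m n f x y - f (x, y)\<bar>
           \<le> 2 * total_modulus f (sqrt ((delta_m a m x)^2 + (delta_m a n y)^2))
       \<and> \<bar>Yhat a m n f x y - f (x, y)\<bar>
           \<le> 2 * (partial_modulus1 f (delta_m a m x) + partial_modulus2 f (delta_m a n y))"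
proof -
  note bd = assms(3)
  define P where "P = pois (x * ln a / (a powr (1 / real m) - 1))"
  define Q where "Q = pois (y * ln a / (a powr (1 / real n) - 1))"
  define u where "u k = (real k / real m - x)^2" for k
  define v where "v k = (real k / real n - y)^2" for k
  define dm where "dm = delta_m a m x"
  define dn where "dn = delta_m a n y"
  define F where "F i j = f (real i / real m, real j / real n)" for i j
  define c where "c = f (x, y)"
  have bm: "a powr (1 / real m) - 1 > 0" using b_pos assms by simp
  have bn: "a powr (1 / real n) - 1 > 0" using b_pos assms by simp
  have lna: "ln a > 0" using assms by simp
  have l1: "x * ln a / (a powr (1 / real m) - 1) \<ge> 0"
    using bm lna assms(6) by (intro divide_nonneg_pos mult_nonneg_nonneg) auto
  have l2: "y * ln a / (a powr (1 / real n) - 1) \<ge> 0"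
    using bn lna assms(7) by (intro divide_nonneg_pos mult_nonneg_nonneg) auto
  have P0: "\<And>k. P k \<ge> 0" unfolding P_def using l1 by (rule pois_nonneg)
  have Q0: "\<And>k. Q k \<ge> 0" unfolding Q_def using l2 by (rule pois_nonneg)
  have P1: "P sums 1" unfolding P_def by (rule pois_sums1)
  have Q1: "Q sums 1" unfolding Q_def by (rule pois_sums1)
  have Pu: "(\<lambda>k. P k * u k) sums dm^2" unfolding P_def u_def dm_def
    using dm_sums assms by simp
  have Qv: "(\<lambda>k. Q k * v k) sums dn^2" unfolding Q_def v_def dn_def
    using dm_sums assms by simp
  have u0: "\<And>k. u k \<ge> 0" and v0: "\<And>k. v k \<ge> 0" by (simp_all add: u_def v_def)
  have dm0: "dm \<ge> 0" unfolding dm_def using dm_sums assms by simp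
  have dn0: "dn \<ge> 0" unfolding dn_def using dm_sums assms by simp
  have Y: "Yhat a m n f x y = (\<Sum>i. \<Sum>j. P i * Q j * F i j)"
    unfolding Yhat_def P_def Q_def F_def using kernel_eq assms by simp
  have um: "real i / real m = x" if "P i \<noteq> 0" "dm = 0" for i
  proof -
    have "u i = 0" using sq_zero[of P u i] P0 u0 Pu that by simp
    then show ?thesis by (simp add: u_def)
  qed
  have vn: "real j / real n = y" if "Q j \<noteq> 0" "dn = 0" for j
  proof -
    have "v j = 0" using sq_zero[of Q v j] Q0 v0 Qv that by simp
    then show ?thesis by (simp add: v_def)
  qed
  have ij0: "real i / real m \<ge> 0" "real j / real n \<ge> 0" for i j by simp_all
  define D where "D = sqrt (dm^2 + dn^2)"
  define W where "W = total_modulus f D"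
  have D0: "D \<ge> 0" by (simp add: D_def)
  have W0: "W \<ge> 0" unfolding W_def using tm_nonneg[OF bd D0] .
  have DD: "D^2 = dm^2 + dn^2" by (simp add: D_def)
  have T: "\<bar>Yhat a m n f x y - f (x, y)\<bar> \<le> 2 * W"
  proof (cases "D = 0")
    case True
    then have "dm = 0" "dn = 0" using DD dm0 dn0 by (auto simp: power2_eq_square add_nonneg_eq_0_iff)
    then have "\<bar>(\<Sum>i. \<Sum>j. P i * Q j * F i j) - c\<bar> \<le> W + 0 * dm^2 + 0 * dn^2"
      using W0 um vn
      by (intro two_dim[OF P0 P1 Pu Q0 Q1 Qv]) (simp add: F_def c_def)
    then show ?thesis using Y W0 by (simp add: c_def)
  next
    case False
    then have Dp: "D > 0" using D0 by simp
    have "\<bar>(\<Sum>i. \<Sum>j. P i * Q j * F i j) - c\<bar> \<le> W + (W / D^2) * dm^2 + (W / D^2) * dn^2"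
    proof (intro two_dim[OF P0 P1 Pu Q0 Q1 Qv])
      fix i j
      have "\<bar>F i j - c\<bar> \<le> (1 + (u i + v j) / D^2) * W"
        unfolding F_def c_def u_def v_def W_def
        by (rule total_bound[OF bd ij0 assms(6,7) Dp])
      moreover have "(1 + (u i + v j) / D^2) * W = W + W / D\<^sup>2 * u i + W / D\<^sup>2 * v j"
        using Dp by (simp add: field_simps)
      ultimately show "\<bar>F i j - c\<bar> \<le> W + W / D\<^sup>2 * u i + W / D\<^sup>2 * v j"
        by simp
    qed
    also have "\<dots> = W + W * (dm^2 + dn^2) / D^2" by (simp add: algebra_simps add_divide_distrib)
    also have "\<dots> = 2 * W" using Dp unfolding DD[symmetric] by simp
    finally show ?thesis using Y by (simp add: c_def)
  qed
  define W1 where "W1 = partial_modulus1 f dm"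
  define W2 where "W2 = partial_modulus2 f dn"
  have W10: "W1 \<ge> 0" unfolding W1_def using pm1_nonneg[OF bd dm0] .
  have W20: "W2 \<ge> 0" unfolding W2_def using pm2_nonneg[OF bd dn0] .
  have Pt: "\<bar>Yhat a m n f x y - f (x, y)\<bar> \<le> 2 * (W1 + W2)"
  proof -
    have "\<bar>(\<Sum>i. \<Sum>j. P i * Q j * F i j) - c\<bar> \<le> (W1 + W2) + (W1 / dm^2) * dm^2 + (W2 / dn^2) * dn^2"
    proof (intro two_dim[OF P0 P1 Pu Q0 Q1 Qv])
      fix i j assume Pi: "P i \<noteq> 0" and Qj: "Q j \<noteq> 0"
      have A1: "\<bar>f (real i / real m, real j / real n) - f (x, real j / real n)\<bar> \<le> W1 + W1 / dm^2 * u i"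
      proof (cases "dm = 0")
        case True
        then show ?thesis using um[OF Pi] W10 by simp
      next
        case False
        then have "dm > 0" using dm0 by simp
        from p1_bound[OF bd ij0(1) ij0(2) assms(6) this]
        show ?thesis by (simp add: W1_def u_def field_simps)
      qed
      have A2: "\<bar>f (x, real j / real n) - f (x, y)\<bar> \<le> W2 + W2 / dn^2 * v j"
      proof (cases "dn = 0")
        case True
        then show ?thesis using vn[OF Qj] W20 by simp
      next
        case False
        then have "dn > 0" using dn0 by simp
        from p2_bound[OF bd ij0(2) assms(7) assms(6) this]
        show ?thesis by (simp add: W2_def v_def field_simps)
      qed
      show "\<bar>F i j - c\<bar> \<le> W1 + W2 + W1 / dm\<^sup>2 * u i + W2 / dn\<^sup>2 * v j"
        using A1 A2 unfolding F_def c_def by linarith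
    qed
    also have "\<dots> \<le> 2 * (W1 + W2)"
    proof -
      have "(W1 / dm^2) * dm^2 \<le> W1" using W10 by (cases "dm = 0") simp_all
      moreover have "(W2 / dn^2) * dn^2 \<le> W2" using W20 by (cases "dn = 0") simp_all
      moreover have "2 * (W1 + W2) = W1 + W2 + W1 + W2" by simp
      ultimately show ?thesis by linarith
    qed
    finally show ?thesis using Y by (simp add: c_def)
  qed
  show ?thesis using T Pt unfolding W_def D_def W1_def W2_def dm_def dn_def by simp
qed

end
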